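(* Let $m,k\ge1$, $N=m+k$, $\alpha>0$, let $\Phi$ be a Minkowski norm on $\mathbb{R}^m$ and $\Psi$ a Minkowski norm on $\mathbb{R}^k$, with $\Phi^0$ the dual norm of $\Phi$. Suppose that, for some $A>0$, there exists a function $K>0$ on $\mathbb{R}^N$ satisfying $$2(\alpha+1)K\,\mathscr L_{\Phi,\Psi,\alpha}(K)=(m+(\alpha+1)k+2\alpha)\left[\Phi(\nabla_z K)^2+\frac{\Phi^0(z)^{2\alpha}}{4}\Psi(\nabla_\sigma K)^2\right]+A\,K^{\frac{2\alpha}{\alpha+1}}.$$ Then the function $\rho>0$ defined by $K=\rho^{2(\alpha+1)}$ solves $$\mathscr L_{\Phi,\Psi,\alpha}\big(\rho^{-(m+(\alpha+1)k-2)}\big)=-\lambda\,\rho^{-(m+(\alpha+1)k+2)}\qquad\text{with }\lambda=\frac{A(m+(\alpha+1)k-2)}{4(\alpha+1)^2}.$$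
   Context: Points of $\mathbb{R}^N=\mathbb{R}^m\times\mathbb{R}^k$ are written $(z,\sigma)$. A Minkowski norm on $\mathbb{R}^n$ is a function $M:\mathbb{R}^n\to[0,\infty)$ such that $M^2\in C^2(\mathbb{R}^n\setminus\{0\})$ is strictly convex and $M(\lambda x)=|\lambda|M(x)$ for all $x$, $\lambda\in\mathbb{R}$; its dual norm is $M^0(x)=\sup_{M(\xi)=1}\langle x,\xi\rangle$. The Finsler Laplacians are $\Delta_\Phi(v)=\operatorname{div}_z(\Phi(\nabla_z v)\nabla\Phi(\nabla_z v))$ and $\Delta_\Psi(v)=\operatorname{div}_\sigma(\Psi(\nabla_\sigma v)\nabla\Psi(\nabla_\sigma v))$, and $\mathscr L_{\Phi,\Psi,\alpha}(v)=\Delta_\Phi(v)+\frac{\Phi^0(z)^{2\alpha}}{4}\Delta_\Psi(v)$. *)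

theory Defs
  imports "HOL-Analysis.Analysis"
begin

definition grad :: "('a::euclidean_space \<Rightarrow> real) \<Rightarrow> 'a \<Rightarrow> 'a" where
  "grad f x = (THE D. GDERIV f x :> D)"

definition minkowski_norm :: "('a::euclidean_space \<Rightarrow> real) \<Rightarrow> bool" where
  "minkowski_norm M \<longleftrightarrow>
     (\<forall>x. 0 \<le> M x) \<and>
     (\<forall>x (l::real). M (l *\<^sub>R x) = \<bar>l\<bar> * M x) \<and>
     (\<exists>g H. (\<forall>x. x \<noteq> 0 \<longrightarrow> GDERIV (\<lambda>y. (M y)\<^sup>2) x :> g x) \<and>
            (\<forall>x. x \<noteq> 0 \<longrightarrow> (g has_derivative H x) (at x)) \<and>
            (\<forall>v. continuous_on (- {0}) (\<lambda>x. H x v))) \<and>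
     (\<forall>x y (t::real). x \<noteq> y \<longrightarrow> 0 < t \<longrightarrow> t < 1 \<longrightarrow>
        (M ((1 - t) *\<^sub>R x + t *\<^sub>R y))\<^sup>2 < (1 - t) * (M x)\<^sup>2 + t * (M y)\<^sup>2)"

definition dual_norm :: "('a::euclidean_space \<Rightarrow> real) \<Rightarrow> 'a \<Rightarrow> real" where
  "dual_norm M x = Sup ((\<lambda>\<xi>. x \<bullet> \<xi>) ` {\<xi>. M \<xi> = 1})"

definition flux :: "('a::euclidean_space \<Rightarrow> real) \<Rightarrow> 'a \<Rightarrow> 'a" where
  "flux M \<xi> = (if \<xi> = 0 then 0 else M \<xi> *\<^sub>R grad M \<xi>)"

definition grad_z :: "('m::euclidean_space \<times> 'k::euclidean_space \<Rightarrow> real) \<Rightarrow> 'm \<times> 'k \<Rightarrow> 'm" where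
  "grad_z v p = grad (\<lambda>z. v (z, snd p)) (fst p)"

definition grad_s :: "('m::euclidean_space \<times> 'k::euclidean_space \<Rightarrow> real) \<Rightarrow> 'm \<times> 'k \<Rightarrow> 'k" where
  "grad_s v p = grad (\<lambda>s. v (fst p, s)) (snd p)"

definition div_z :: "('m::euclidean_space \<times> 'k::euclidean_space \<Rightarrow> 'm) \<Rightarrow> 'm \<times> 'k \<Rightarrow> real" where
  "div_z V p = (\<Sum>b\<in>Basis. frechet_derivative (\<lambda>z. V (z, snd p) \<bullet> b) (at (fst p)) b)"

definition div_s :: "('m::euclidean_space \<times> 'k::euclidean_space \<Rightarrow> 'k) \<Rightarrow> 'm \<times> 'k \<Rightarrow> real" where
  "div_s V p = (\<Sum>b\<in>Basis. frechet_derivative (\<lambda>s. V (fst p, s) \<bullet> b) (at (snd p)) b)"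

definition finsler_lap_z :: "('m::euclidean_space \<Rightarrow> real) \<Rightarrow> ('m \<times> 'k::euclidean_space \<Rightarrow> real) \<Rightarrow> 'm \<times> 'k \<Rightarrow> real" where
  "finsler_lap_z Phi v = div_z (\<lambda>q. flux Phi (grad_z v q))"

definition finsler_lap_s :: "('k::euclidean_space \<Rightarrow> real) \<Rightarrow> ('m::euclidean_space \<times> 'k \<Rightarrow> real) \<Rightarrow> 'm \<times> 'k \<Rightarrow> real" where
  "finsler_lap_s Psi v = div_s (\<lambda>q. flux Psi (grad_s v q))"

definition opL :: "('m::euclidean_space \<Rightarrow> real) \<Rightarrow> ('k::euclidean_space \<Rightarrow> real) \<Rightarrow> real
                    \<Rightarrow> ('m \<times> 'k \<Rightarrow> real) \<Rightarrow> 'm \<times> 'k \<Rightarrow> real" where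
  "opL Phi Psi \<alpha> v p = finsler_lap_z Phi v p
      + (dual_norm Phi (fst p)) powr (2 * \<alpha>) / 4 * finsler_lap_s Psi v p"

end

theory Submission
  imports Defs
begin

lemma gderiv_unique:
  assumes "GDERIV f x :> D" "GDERIV f x :> D'" shows "D = D'"
proof -
  have "(\<lambda>h. h \<bullet> D) = (\<lambda>h. h \<bullet> D')"
    using assms unfolding gderiv_def by (rule has_derivative_unique)
  then have "(D - D') \<bullet> D = (D - D') \<bullet> D'" by meson
  then have "(D - D') \<bullet> (D - D') = 0" by (simp add: inner_diff_right)
  then show ?thesis by simp
qed

lemma grad_eq: "GDERIV f x :> D \<Longrightarrow> grad f x = D"
  unfolding grad_def using gderiv_unique by blast

lemma gderiv_exists:
  fixes f :: "'a::euclidean_space \<Rightarrow> real"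
  assumes "(f has_derivative f') (at x)"
  shows "GDERIV f x :> (\<Sum>b\<in>Basis. f' b *\<^sub>R b)"
proof -
  define D where "D = (\<Sum>b\<in>Basis. f' b *\<^sub>R b)"
  have lin: "linear f'" using assms has_derivative_linear by blast
  have "f' h = h \<bullet> D" for h
  proof -
    have "f' h = f' (\<Sum>b\<in>Basis. (h \<bullet> b) *\<^sub>R b)" by (simp add: euclidean_representation)
    also have "\<dots> = (\<Sum>b\<in>Basis. (h \<bullet> b) * f' b)"
      by (simp add: linear_sum[OF lin] linear_scale[OF lin])
    also have "\<dots> = h \<bullet> D"
      by (simp add: D_def inner_sum_right mult.commute)
    finally show ?thesis .
  qed
  then have "f' = (\<lambda>h. h \<bullet> D)" by auto
  then show ?thesis unfolding D_def[symmetric] gderiv_def using assms by simp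
qed

lemma partial_z_deriv:
  assumes "(K has_derivative K') (at (z, s))"
  shows "((\<lambda>z'. K (z', s)) has_derivative (\<lambda>h. K' (h, 0))) (at z)"
proof -
  have "((\<lambda>z'. (z', s)) has_derivative (\<lambda>h. (h, 0))) (at z)"
    by (auto intro!: derivative_eq_intros)
  from has_derivative_compose[OF this assms] show ?thesis by simp
qed

lemma partial_s_deriv:
  assumes "(K has_derivative K') (at (z, s))"
  shows "((\<lambda>s'. K (z, s')) has_derivative (\<lambda>h. K' (0, h))) (at s)"
proof -
  have "((\<lambda>s'. (z, s')) has_derivative (\<lambda>h. (0, h))) (at s)"
    by (auto intro!: derivative_eq_intros)
  from has_derivative_compose[OF this assms] show ?thesis by simp
qed

lemma gderiv_grad_z:
  fixes v :: "'m::euclidean_space \<times> 'k::euclidean_space \<Rightarrow> real"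
  assumes "v differentiable (at p)"
  shows "GDERIV (\<lambda>z. v (z, snd p)) (fst p) :> grad_z v p"
proof -
  obtain v' where "(v has_derivative v') (at (fst p, snd p))" using assms by (auto simp: differentiable_def)
  from gderiv_exists[OF partial_z_deriv[OF this]] show ?thesis
    unfolding grad_z_def using grad_eq by metis
qed

lemma gderiv_grad_s:
  fixes v :: "'m::euclidean_space \<times> 'k::euclidean_space \<Rightarrow> real"
  assumes "v differentiable (at p)"
  shows "GDERIV (\<lambda>s. v (fst p, s)) (snd p) :> grad_s v p"
proof -
  obtain v' where "(v has_derivative v') (at (fst p, snd p))" using assms by (auto simp: differentiable_def)
  from gderiv_exists[OF partial_s_deriv[OF this]] show ?thesis
    unfolding grad_s_def using grad_eq by metis
qed

lemma grad_z_powr: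
  fixes v :: "'m::euclidean_space \<times> 'k::euclidean_space \<Rightarrow> real"
  assumes "v differentiable (at p)" "v p > 0"
  shows "grad_z (\<lambda>q. v q powr b) p = (b * v p powr (b - 1)) *\<^sub>R grad_z v p"
proof -
  have d: "DERIV (\<lambda>t. t powr b) (v p) :> b * v p powr (b - 1)"
    using assms(2) by (auto intro!: derivative_eq_intros)
  from GDERIV_DERIV_compose[OF gderiv_grad_z[OF assms(1)], of "\<lambda>t. t powr b"] d
  show ?thesis unfolding grad_z_def[of "\<lambda>q. v q powr b"] by (intro grad_eq) simp
qed

lemma grad_s_powr:
  fixes v :: "'m::euclidean_space \<times> 'k::euclidean_space \<Rightarrow> real"
  assumes "v differentiable (at p)" "v p > 0"
  shows "grad_s (\<lambda>q. v q powr b) p = (b * v p powr (b - 1)) *\<^sub>R grad_s v p"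
proof -
  have d: "DERIV (\<lambda>t. t powr b) (v p) :> b * v p powr (b - 1)"
    using assms(2) by (auto intro!: derivative_eq_intros)
  from GDERIV_DERIV_compose[OF gderiv_grad_s[OF assms(1)], of "\<lambda>t. t powr b"] d
  show ?thesis unfolding grad_s_def[of "\<lambda>q. v q powr b"] by (intro grad_eq) simp
qed

lemma powr_differentiable:
  fixes v :: "'a::real_normed_vector \<Rightarrow> real"
  assumes "v differentiable (at p)" "v p > 0"
  shows "(\<lambda>q. v q powr b) differentiable (at p)"
proof -
  obtain v' where "(v has_derivative v') (at p)" using assms by (auto simp: differentiable_def)
  from has_derivative_powr[OF this has_derivative_const, of b] assms
  show ?thesis by (auto simp: differentiable_def)
qed

lemma mk_zero: "minkowski_norm M \<Longrightarrow> M 0 = 0"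
  unfolding minkowski_norm_def by (metis abs_zero mult_zero_left scaleR_zero_left)

lemma mk_neg: "minkowski_norm M \<Longrightarrow> M (- x) = M x"
  unfolding minkowski_norm_def by (metis abs_minus_cancel abs_one mult_1 scaleR_minus1_left)

lemma mk_nonneg: "minkowski_norm M \<Longrightarrow> M x \<ge> 0"
  unfolding minkowski_norm_def by blast

lemma mk_pos:
  assumes M: "minkowski_norm M" and x: "x \<noteq> 0" shows "M x > 0"
proof -
  have sc: "\<forall>x y (t::real). x \<noteq> y \<longrightarrow> 0 < t \<longrightarrow> t < 1 \<longrightarrow>
        (M ((1 - t) *\<^sub>R x + t *\<^sub>R y))\<^sup>2 < (1 - t) * (M x)\<^sup>2 + t * (M y)\<^sup>2"
    using M unfolding minkowski_norm_def by blast
  have "x \<noteq> - x"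
  proof
    assume "x = - x"
    then have "x + x = 0" by (metis add.right_inverse)
    then have "(2::real) *\<^sub>R x = 0" by (simp add: scaleR_2)
    then show False using x by simp
  qed
  have "(M ((1 - 1/2) *\<^sub>R x + (1/2::real) *\<^sub>R (- x)))\<^sup>2 < (1 - 1/2) * (M x)\<^sup>2 + 1/2 * (M (-x))\<^sup>2"
    using sc[rule_format, of x "-x" "1/2"] \<open>x \<noteq> - x\<close> by simp
  then have "0 < (M x)\<^sup>2" using mk_zero[OF M] mk_neg[OF M] by (simp add: scaleR_right_diff_distrib algebra_simps)
  then show ?thesis using mk_nonneg[OF M, of x] by (simp add: less_le)
qed

lemma mk_gderiv:
  assumes M: "minkowski_norm M" and x: "x \<noteq> 0" shows "GDERIV M x :> grad M x"
proof -
  obtain g where g: "\<forall>x. x \<noteq> 0 \<longrightarrow> GDERIV (\<lambda>y. (M y)\<^sup>2) x :> g x"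
    using M unfolding minkowski_norm_def by blast
  have pos: "0 < (M x)\<^sup>2" using mk_pos[OF M x] by simp
  have "DERIV sqrt ((M x)\<^sup>2) :> inverse (sqrt ((M x)\<^sup>2)) / 2" by (rule DERIV_real_sqrt[OF pos])
  from GDERIV_DERIV_compose[OF g[rule_format, OF x] this]
  have "GDERIV (\<lambda>y. sqrt ((M y)\<^sup>2)) x :> (inverse (sqrt ((M x)\<^sup>2)) / 2) *\<^sub>R g x" .
  moreover have "(\<lambda>y. sqrt ((M y)\<^sup>2)) = M" using mk_nonneg[OF M] by auto
  ultimately have "GDERIV M x :> (inverse (sqrt ((M x)\<^sup>2)) / 2) *\<^sub>R g x" by simp
  then show ?thesis using grad_eq by metis
qed

lemma mk_grad_scale:
  assumes M: "minkowski_norm M" and x: "x \<noteq> 0" and c: "c \<noteq> 0"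
  shows "grad M (c *\<^sub>R x) = sgn c *\<^sub>R grad M x"
proof -
  have cx: "c *\<^sub>R x \<noteq> 0" using x c by simp
  have hom: "\<And>y. M (c *\<^sub>R y) = \<bar>c\<bar> * M y" using M unfolding minkowski_norm_def by blast
  have d1: "GDERIV (\<lambda>y. M (c *\<^sub>R y)) x :> c *\<^sub>R grad M (c *\<^sub>R x)"
  proof -
    have "((\<lambda>y. c *\<^sub>R y) has_derivative (\<lambda>h. c *\<^sub>R h)) (at x)"
      by (auto intro!: derivative_eq_intros)
    from has_derivative_compose[OF this mk_gderiv[OF M cx, unfolded gderiv_def]]
    show ?thesis unfolding gderiv_def by (simp add: mult.commute)
  qed
  have d2: "GDERIV (\<lambda>y. M (c *\<^sub>R y)) x :> \<bar>c\<bar> *\<^sub>R grad M x"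
  proof -
    have "((\<lambda>y. \<bar>c\<bar> * M y) has_derivative (\<lambda>h. \<bar>c\<bar> * (h \<bullet> grad M x))) (at x)"
      using mk_gderiv[OF M x] unfolding gderiv_def by (auto intro!: derivative_eq_intros)
    then show ?thesis unfolding gderiv_def hom by simp
  qed
  have "c *\<^sub>R grad M (c *\<^sub>R x) = \<bar>c\<bar> *\<^sub>R grad M x" using gderiv_unique[OF d1 d2] .
  then have "grad M (c *\<^sub>R x) = (\<bar>c\<bar> / c) *\<^sub>R grad M x"
    using c by (metis (no_types, lifting) divide_inverse_commute right_inverse scaleR_one scaleR_scaleR)
  moreover have "\<bar>c\<bar> / c = sgn c" using c by (simp add: sgn_if)
  ultimately show ?thesis by simp
qed

lemma mk_flux_scale:
  assumes M: "minkowski_norm M"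
  shows "flux M (c *\<^sub>R x) = c *\<^sub>R flux M x"
proof (cases "x = 0 \<or> c = 0")
  case True then show ?thesis by (auto simp: flux_def)
next
  case False
  have hom: "M (c *\<^sub>R x) = \<bar>c\<bar> * M x" using M unfolding minkowski_norm_def by blast
  show ?thesis using False mk_grad_scale[OF M, of x c]
    by (auto simp: flux_def hom sgn_if)
qed

lemma mk_euler:
  assumes M: "minkowski_norm M" and x: "x \<noteq> 0" shows "x \<bullet> grad M x = M x"
proof -
  have hom: "\<And>t. M (t *\<^sub>R x) = \<bar>t\<bar> * M x" using M unfolding minkowski_norm_def by blast
  have "((\<lambda>t::real. t *\<^sub>R x) has_derivative (\<lambda>s. s *\<^sub>R x)) (at 1)"
    by (auto intro!: derivative_eq_intros)
  moreover have "(M has_derivative (\<lambda>h. h \<bullet> grad M x)) (at ((\<lambda>t::real. t *\<^sub>R x) 1))"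
    using mk_gderiv[OF M x, unfolded gderiv_def] by simp
  ultimately have "((\<lambda>t::real. M (t *\<^sub>R x)) has_derivative (\<lambda>s. (s *\<^sub>R x) \<bullet> grad M x)) (at 1)"
    by (rule has_derivative_compose)
  then
  have d1: "((\<lambda>t::real. M (t *\<^sub>R x)) has_derivative (\<lambda>s. (s *\<^sub>R x) \<bullet> grad M x)) (at 1)"
    by simp
  have "((\<lambda>t::real. t * M x) has_derivative (\<lambda>s. s * M x)) (at 1)"
    by (auto intro!: derivative_eq_intros)
  then have d2: "((\<lambda>t::real. M (t *\<^sub>R x)) has_derivative (\<lambda>s. s * M x)) (at 1)"
    by (rule has_derivative_transform_within_open[where s="{0<..}"]) (auto simp: hom)
  have "(\<lambda>s. (s *\<^sub>R x) \<bullet> grad M x) = (\<lambda>s::real. s * M x)"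
    using has_derivative_unique[OF d1 d2] .
  then have "(1 *\<^sub>R x) \<bullet> grad M x = 1 * M x" by meson
  then show ?thesis by simp
qed

lemma mk_flux_inner:
  assumes M: "minkowski_norm M" shows "\<xi> \<bullet> flux M \<xi> = (M \<xi>)\<^sup>2"
  using mk_euler[OF M] mk_zero[OF M] by (auto simp: flux_def power2_eq_square)

lemma div_z_scale:
  fixes f :: "'m::euclidean_space \<times> 'k::euclidean_space \<Rightarrow> real" and W :: "'m \<times> 'k \<Rightarrow> 'm"
  assumes f: "\<forall>q. f differentiable (at q)" and W: "\<forall>q. W differentiable (at q)"
  shows "div_z (\<lambda>q. f q *\<^sub>R W q) p = grad_z f p \<bullet> W p + f p * div_z W p"
proof -
  obtain z s where p: "p = (z, s)" by (cases p)
  have gf0: "GDERIV (\<lambda>z. f (z, snd p)) (fst p) :> grad_z f p"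
    using f gderiv_grad_z by blast
  have gf: "((\<lambda>z'. f (z', s)) has_derivative (\<lambda>h. h \<bullet> grad_z f p)) (at z)"
    using gf0 unfolding gderiv_def p by simp
  obtain W' where W': "(W has_derivative W') (at (z,s))" using W differentiable_def by blast
  have Wz: "((\<lambda>z'. W (z', s)) has_derivative (\<lambda>h. W' (h, 0))) (at z)" by (rule partial_z_deriv[OF W'])
  have e1: "frechet_derivative (\<lambda>z'. W (z', s) \<bullet> b) (at z) = (\<lambda>h. W' (h,0) \<bullet> b)" for b
  proof -
    have "((\<lambda>z'. W (z', s) \<bullet> b) has_derivative (\<lambda>h. W' (h,0) \<bullet> b)) (at z)"
      by (rule has_derivative_inner_left[OF Wz])
    then show ?thesis by (rule frechet_derivative_at[symmetric])
  qed
  have e2: "frechet_derivative (\<lambda>z'. f (z', s) * (W (z', s) \<bullet> b)) (at z)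
      = (\<lambda>h. f (z, s) * (W' (h,0) \<bullet> b) + (h \<bullet> grad_z f p) * (W (z, s) \<bullet> b))" for b
    by (rule frechet_derivative_at[symmetric], rule has_derivative_mult[OF gf has_derivative_inner_left[OF Wz]])
  have s1: "div_z (\<lambda>q. f q *\<^sub>R W q) p
      = (\<Sum>b\<in>Basis. f (z, s) * (W' (b,0) \<bullet> b) + (b \<bullet> grad_z f p) * (W (z, s) \<bullet> b))"
    unfolding div_z_def p fst_conv snd_conv inner_scaleR_left e2 ..
  have s2: "(\<Sum>b\<in>Basis. f (z, s) * (W' (b,0) \<bullet> b) + (b \<bullet> grad_z f p) * (W (z, s) \<bullet> b))
     = f (z, s) * (\<Sum>b\<in>Basis. W' (b,0) \<bullet> b) + (\<Sum>b\<in>Basis. (b \<bullet> grad_z f p) * (W (z, s) \<bullet> b))"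
    by (simp add: sum.distrib sum_distrib_left)
  have s3: "(\<Sum>b\<in>Basis. (b \<bullet> grad_z f p) * (W (z, s) \<bullet> b)) = grad_z f p \<bullet> W (z, s)"
    unfolding euclidean_inner[of "grad_z f p" "W (z, s)"] by (simp add: inner_commute)
  have s4: "div_z W p = (\<Sum>b\<in>Basis. W' (b,0) \<bullet> b)"
    unfolding div_z_def p fst_conv snd_conv e1 ..
  show ?thesis unfolding s1 s2 s3 s4 using p by simp
qed
lemma div_s_scale:
  fixes f :: "'m::euclidean_space \<times> 'k::euclidean_space \<Rightarrow> real" and W :: "'m \<times> 'k \<Rightarrow> 'k"
  assumes f: "\<forall>q. f differentiable (at q)" and W: "\<forall>q. W differentiable (at q)"
  shows "div_s (\<lambda>q. f q *\<^sub>R W q) p = grad_s f p \<bullet> W p + f p * div_s W p"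
proof -
  obtain z s where p: "p = (z, s)" by (cases p)
  have gf0: "GDERIV (\<lambda>s. f (fst p, s)) (snd p) :> grad_s f p"
    using f gderiv_grad_s by blast
  have gf: "((\<lambda>s'. f (z, s')) has_derivative (\<lambda>h. h \<bullet> grad_s f p)) (at s)"
    using gf0 unfolding gderiv_def p by simp
  obtain W' where W': "(W has_derivative W') (at (z,s))" using W differentiable_def by blast
  have Wz: "((\<lambda>s'. W (z, s')) has_derivative (\<lambda>h. W' (0, h))) (at s)" by (rule partial_s_deriv[OF W'])
  have e1: "frechet_derivative (\<lambda>s'. W (z, s') \<bullet> b) (at s) = (\<lambda>h. W' (0,h) \<bullet> b)" for b
  proof -
    have "((\<lambda>s'. W (z, s') \<bullet> b) has_derivative (\<lambda>h. W' (0,h) \<bullet> b)) (at s)"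
      by (rule has_derivative_inner_left[OF Wz])
    then show ?thesis by (rule frechet_derivative_at[symmetric])
  qed
  have e2: "frechet_derivative (\<lambda>s'. f (z, s') * (W (z, s') \<bullet> b)) (at s)
      = (\<lambda>h. f (z, s) * (W' (0,h) \<bullet> b) + (h \<bullet> grad_s f p) * (W (z, s) \<bullet> b))" for b
    by (rule frechet_derivative_at[symmetric], rule has_derivative_mult[OF gf has_derivative_inner_left[OF Wz]])
  have s1: "div_s (\<lambda>q. f q *\<^sub>R W q) p
      = (\<Sum>b\<in>Basis. f (z, s) * (W' (0,b) \<bullet> b) + (b \<bullet> grad_s f p) * (W (z, s) \<bullet> b))"
    unfolding div_s_def p fst_conv snd_conv inner_scaleR_left e2 ..
  have s2: "(\<Sum>b\<in>Basis. f (z, s) * (W' (0,b) \<bullet> b) + (b \<bullet> grad_s f p) * (W (z, s) \<bullet> b))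
     = f (z, s) * (\<Sum>b\<in>Basis. W' (0,b) \<bullet> b) + (\<Sum>b\<in>Basis. (b \<bullet> grad_s f p) * (W (z, s) \<bullet> b))"
    by (simp add: sum.distrib sum_distrib_left)
  have s3: "(\<Sum>b\<in>Basis. (b \<bullet> grad_s f p) * (W (z, s) \<bullet> b)) = grad_s f p \<bullet> W (z, s)"
    unfolding euclidean_inner[of "grad_s f p" "W (z, s)"] by (simp add: inner_commute)
  have s4: "div_s W p = (\<Sum>b\<in>Basis. W' (0,b) \<bullet> b)"
    unfolding div_s_def p fst_conv snd_conv e1 ..
  show ?thesis unfolding s1 s2 s3 s4 using p by simp
qed
lemma grad_z_cpowr:
  fixes v :: "'m::euclidean_space \<times> 'k::euclidean_space \<Rightarrow> real"
  assumes "v differentiable (at p)" "v p > 0"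
  shows "grad_z (\<lambda>q. a * v q powr b) p = (a * (b * v p powr (b - 1))) *\<^sub>R grad_z v p"
proof -
  have d: "DERIV (\<lambda>t. a * t powr b) (v p) :> a * (b * v p powr (b - 1))"
    using assms(2) by (auto intro!: derivative_eq_intros)
  from GDERIV_DERIV_compose[OF gderiv_grad_z[OF assms(1)], of "\<lambda>t. a * t powr b"] d
  show ?thesis unfolding grad_z_def[of "\<lambda>q. a * v q powr b"] by (intro grad_eq) simp
qed

lemma grad_s_cpowr:
  fixes v :: "'m::euclidean_space \<times> 'k::euclidean_space \<Rightarrow> real"
  assumes "v differentiable (at p)" "v p > 0"
  shows "grad_s (\<lambda>q. a * v q powr b) p = (a * (b * v p powr (b - 1))) *\<^sub>R grad_s v p"
proof -
  have d: "DERIV (\<lambda>t. a * t powr b) (v p) :> a * (b * v p powr (b - 1))"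
    using assms(2) by (auto intro!: derivative_eq_intros)
  from GDERIV_DERIV_compose[OF gderiv_grad_s[OF assms(1)], of "\<lambda>t. a * t powr b"] d
  show ?thesis unfolding grad_s_def[of "\<lambda>q. a * v q powr b"] by (intro grad_eq) simp
qed

lemma cpowr_differentiable:
  fixes v :: "'a::real_normed_vector \<Rightarrow> real"
  assumes "v differentiable (at p)" "v p > 0"
  shows "(\<lambda>q. a * v q powr b) differentiable (at p)"
proof -
  obtain D where D: "((\<lambda>q. v q powr b) has_derivative D) (at p)"
    using powr_differentiable[OF assms] unfolding differentiable_def by blast
  from has_derivative_mult[OF has_derivative_const[of a] D] show ?thesis
    unfolding differentiable_def by blast
qed
theorem proposition2p3:
  fixes Phi :: "'m::euclidean_space \<Rightarrow> real"
    and Psi :: "'k::euclidean_space \<Rightarrow> real"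
    and K :: "'m \<times> 'k \<Rightarrow> real"
    and \<alpha> A :: real
  assumes alpha_pos: "\<alpha> > 0"
    and Phi: "minkowski_norm Phi"
    and Psi: "minkowski_norm Psi"
    and A_pos: "A > 0"
    and K_pos: "\<forall>p. K p > 0"
    and K_diff: "\<forall>p. K differentiable (at p)"
    and flux_z_diff: "\<forall>p. (\<lambda>q. flux Phi (grad_z K q)) differentiable (at p)"
    and flux_s_diff: "\<forall>p. (\<lambda>q. flux Psi (grad_s K q)) differentiable (at p)"
    and eq: "\<forall>p. 2 * (\<alpha> + 1) * K p * opL Phi Psi \<alpha> K p =
               (real DIM('m) + (\<alpha> + 1) * real DIM('k) + 2 * \<alpha>) *
                 ((Phi (grad_z K p))\<^sup>2
                  + (dual_norm Phi (fst p)) powr (2 * \<alpha>) / 4 * (Psi (grad_s K p))\<^sup>2)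
               + A * (K p) powr (2 * \<alpha> / (\<alpha> + 1))"
  shows "let Q = real DIM('m) + (\<alpha> + 1) * real DIM('k);
             \<rho> = (\<lambda>p. (K p) powr (1 / (2 * (\<alpha> + 1))));
             lam = A * (Q - 2) / (4 * (\<alpha> + 1)\<^sup>2)
         in (\<forall>p. \<rho> p > 0 \<and> K p = (\<rho> p) powr (2 * (\<alpha> + 1))) \<and>
            (\<forall>p. opL Phi Psi \<alpha> (\<lambda>q. (\<rho> q) powr (-(Q - 2))) p = - lam * (\<rho> p) powr (-(Q + 2)))"
proof -
  define Q where "Q = real DIM('m) + (\<alpha> + 1) * real DIM('k)"
  define \<beta> where "\<beta> = -(Q - 2) / (2 * (\<alpha> + 1))"
  define lam where "lam = A * (Q - 2) / (4 * (\<alpha> + 1)\<^sup>2)"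
  have a1: "\<alpha> + 1 > 0" using alpha_pos by simp
  have part1: "\<forall>p. K p powr (1 / (2 * (\<alpha> + 1))) > 0 \<and>
      K p = (K p powr (1 / (2 * (\<alpha> + 1)))) powr (2 * (\<alpha> + 1))"
  proof
    fix p
    have k: "K p > 0" using K_pos by blast
    have "(K p powr (1 / (2 * (\<alpha> + 1)))) powr (2 * (\<alpha> + 1)) = K p powr 1"
      unfolding powr_powr using a1 by simp
    then show "K p powr (1 / (2 * (\<alpha> + 1))) > 0 \<and>
      K p = (K p powr (1 / (2 * (\<alpha> + 1)))) powr (2 * (\<alpha> + 1))" using k by simp
  qed
  have u_eq: "(\<lambda>q. (K q powr (1 / (2 * (\<alpha> + 1)))) powr (-(Q - 2))) = (\<lambda>q. K q powr \<beta>)"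
    unfolding powr_powr \<beta>_def by (simp add: field_simps)
  have Kd: "\<And>q. K differentiable (at q)" using K_diff by blast
  have Kp: "\<And>q. K q > 0" using K_pos by blast
  define f where "f = (\<lambda>q. \<beta> * K q powr (\<beta> - 1))"
  have fd: "\<forall>q. f differentiable (at q)" unfolding f_def using cpowr_differentiable[OF Kd Kp] by blast
  have fluxz: "(\<lambda>q. flux Phi (grad_z (\<lambda>q. K q powr \<beta>) q)) = (\<lambda>q. f q *\<^sub>R flux Phi (grad_z K q))"
    unfolding f_def grad_z_powr[OF Kd Kp] mk_flux_scale[OF Phi] ..
  have fluxs: "(\<lambda>q. flux Psi (grad_s (\<lambda>q. K q powr \<beta>) q)) = (\<lambda>q. f q *\<^sub>R flux Psi (grad_s K q))"
    unfolding f_def grad_s_powr[OF Kd Kp] mk_flux_scale[OF Psi] ..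
  have part2: "opL Phi Psi \<alpha> (\<lambda>q. K q powr \<beta>) p = - lam * (K p powr (1 / (2 * (\<alpha> + 1)))) powr (-(Q + 2))" for p
  proof -
    define k where "k = K p"
    have k: "k > 0" using Kp k_def by simp
    define c where "c = dual_norm Phi (fst p) powr (2 * \<alpha>) / 4"
    define X where "X = (Phi (grad_z K p))\<^sup>2"
    define Y where "Y = (Psi (grad_s K p))\<^sup>2"
    define LZ where "LZ = finsler_lap_z Phi K p"
    define LS where "LS = finsler_lap_s Psi K p"
    define P where "P = k powr (\<beta> - 2)"
    define E where "E = k powr (2 * \<alpha> / (\<alpha> + 1))"
    have gfz: "grad_z f p = (\<beta> * ((\<beta> - 1) * k powr (\<beta> - 1 - 1))) *\<^sub>R grad_z K p"
      unfolding f_def k_def by (rule grad_z_cpowr[OF Kd Kp])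
    have gfs: "grad_s f p = (\<beta> * ((\<beta> - 1) * k powr (\<beta> - 1 - 1))) *\<^sub>R grad_s K p"
      unfolding f_def k_def by (rule grad_s_cpowr[OF Kd Kp])
    have b11: "\<beta> - 1 - 1 = \<beta> - 2" by simp
    have hk1: "k powr (\<beta> - 1) = k powr (\<beta> - 2) * k"
      using powr_add[of k "\<beta> - 2" 1] k by simp
    have LZu: "finsler_lap_z Phi (\<lambda>q. K q powr \<beta>) p = \<beta> * (\<beta> - 1) * P * X + \<beta> * (P * k) * LZ"
    proof -
      have "finsler_lap_z Phi (\<lambda>q. K q powr \<beta>) p = grad_z f p \<bullet> flux Phi (grad_z K p) + f p * LZ"
        unfolding finsler_lap_z_def fluxz LZ_def
        by (rule div_z_scale[OF fd]) (use flux_z_diff in blast)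
      also have "\<dots> = \<beta> * (\<beta> - 1) * P * X + \<beta> * (P * k) * LZ"
        unfolding gfz inner_scaleR_left mk_flux_inner[OF Phi]
        unfolding f_def P_def X_def k_def[symmetric] b11 hk1 by simp
      finally show ?thesis .
    qed
    have LSu: "finsler_lap_s Psi (\<lambda>q. K q powr \<beta>) p = \<beta> * (\<beta> - 1) * P * Y + \<beta> * (P * k) * LS"
    proof -
      have "finsler_lap_s Psi (\<lambda>q. K q powr \<beta>) p = grad_s f p \<bullet> flux Psi (grad_s K p) + f p * LS"
        unfolding finsler_lap_s_def fluxs LS_def
        by (rule div_s_scale[OF fd]) (use flux_s_diff in blast)
      also have "\<dots> = \<beta> * (\<beta> - 1) * P * Y + \<beta> * (P * k) * LS"
        unfolding gfs inner_scaleR_left mk_flux_inner[OF Psi]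
        unfolding f_def P_def Y_def k_def[symmetric] b11 hk1 by simp
      finally show ?thesis .
    qed
    have eqp: "2 * (\<alpha> + 1) * k * (LZ + c * LS) = (Q + 2 * \<alpha>) * (X + c * Y) + A * E"
      using eq[rule_format, of p] unfolding opL_def k_def c_def X_def Y_def LZ_def LS_def E_def Q_def
      by simp
    have hb: "\<beta> - 1 = -(Q + 2 * \<alpha>) / (2 * (\<alpha> + 1))"
      unfolding \<beta>_def using a1 by (simp add: field_simps)
    have hk: "k * (LZ + c * LS) = ((Q + 2 * \<alpha>) * (X + c * Y) + A * E) / (2 * (\<alpha> + 1))"
      using eqp a1 by (simp add: field_simps)
    have "opL Phi Psi \<alpha> (\<lambda>q. K q powr \<beta>) p = \<beta> * P * ((\<beta> - 1) * (X + c * Y) + k * (LZ + c * LS))"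
      unfolding opL_def LZu LSu c_def[symmetric] by (simp add: algebra_simps)
    also have "\<dots> = \<beta> * P * (A * E / (2 * (\<alpha> + 1)))"
      unfolding hb hk using a1 by (simp add: field_simps)
    also have "\<dots> = - lam * (P * E)"
      unfolding lam_def \<beta>_def using a1 by (simp add: field_simps power2_eq_square) (simp add: minus_divide_left algebra_simps)
    also have "P * E = (K p powr (1 / (2 * (\<alpha> + 1)))) powr (-(Q + 2))"
    proof -
      have "P * E = k powr (\<beta> - 2 + 2 * \<alpha> / (\<alpha> + 1))" unfolding P_def E_def by (simp add: powr_add)
      also have "\<beta> - 2 + 2 * \<alpha> / (\<alpha> + 1) = (1 / (2 * (\<alpha> + 1))) * (-(Q + 2))"
      proof -
        define d where "d = \<alpha> + 1"
        have d: "d > 0" "d \<noteq> 0" using a1 d_def by simp_all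
        have al: "\<alpha> = d - 1" unfolding d_def by simp
        have bd: "\<beta> = -(Q - 2) / (2 * d)" unfolding \<beta>_def d_def ..
        show ?thesis unfolding d_def[symmetric] bd unfolding al using d by (simp add: field_simps)
      qed
      finally show ?thesis unfolding k_def powr_powr .
    qed
    finally show ?thesis .
  qed
  show ?thesis unfolding Let_def
    using part1 part2 u_eq unfolding Q_def lam_def by simp
qed

end
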